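(* Let $K$ be a finite simplicial complex, $f$ an injective filtration function on $K$, $n$ a positive integer, and $\alpha$ an $n$-cycle whose homology class $[\alpha]\in H_n(K^f_a)$ is born at $a$ and terminated at a finite value $b>a$. Let $D=(0,\frac{b-a}{2}]$ and let $\Sigma_\varepsilon$ and $\Pi_\varepsilon$ ($\varepsilon\in D$) be as defined in the context. Then for each $t\in D$ there exists $\delta>0$ such that $\Sigma_\varepsilon$ and $\Pi_\varepsilon$ are constant for $\varepsilon\in(t-\delta,t]\cap D$.
   Context: A filtration function on a finite simplicial complex $K$ is a map $f\colon K\to\mathbb{R}$ with $f(\sigma)\le f(\tau)$ whenever $\sigma$ is a face of $\tau$. Sublevel complexes are $K^f_r=f^{-1}((-\infty,r])$, with inclusions $K^f_q\subseteq K^f_r$ for $q\le r$; homology is taken with coefficients in a fixed field. For a nontrivial class $[\alpha]\in H_n(K^f_r)$, its birth is the infimum of $q\le r$ such that $[\alpha]$ is in the image of $H_n(K^f_q)\to H_n(K^f_r)$, and its termination scale is the infimum of $q\ge r$ such that $[\alpha]$ maps to $0$ in $H_n(K^f_q)$. $\|f-g\|_\infty=\max_{\sigma\in K}|f(\sigma)-g(\sigma)|$. An (injective) $\varepsilon$-perturbation of $f$ is an injective filtration function $g$ on $K$ with $\|f-g\|_\infty\le\varepsilon$. For such $g$, let $\Delta_{g,\alpha}$ denote the simplex $\tau$ of $K$ such that the cycle $\alpha$ is a boundary in $K^g_{g(\tau)}$ but not in $K^g_r$ for any $r<g(\tau)$ (the $(n+1)$-simplex of $K^g$ terminating $[\alpha]$).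 Define $\Sigma_\varepsilon=\{\Delta_{g,\alpha}: g \text{ an injective } \varepsilon\text{-perturbation of } f\}$. Let $\sigma_1,\ldots,\sigma_m$ be the $(n+1)$-dimensional simplices of $K$; each injective filtration function $g$ induces a linear ordering of $\{\sigma_1,\dots,\sigma_m\}$ (by increasing $g$-value), regarded as a permutation in $S_m$. Define $\Pi_\varepsilon$ as the set of all such permutations induced by injective $\varepsilon$-perturbations of $f$. *)

theory Defs
  imports Complex_Main "HOL-Combinatorics.Permutations"
begin

definition simplicial_complex :: "'v set set \<Rightarrow> bool" where
  "simplicial_complex K \<longleftrightarrow> finite K \<and>
     (\<forall>\<sigma>\<in>K. finite \<sigma> \<and> \<sigma> \<noteq> {}) \<and>
     (\<forall>\<sigma>\<in>K. \<forall>\<tau>. \<tau> \<subseteq> \<sigma> \<and> \<tau> \<noteq> {} \<longrightarrow> \<tau> \<in> K)"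

definition filtration_fun :: "'v set set \<Rightarrow> ('v set \<Rightarrow> real) \<Rightarrow> bool" where
  "filtration_fun K f \<longleftrightarrow> (\<forall>\<sigma>\<in>K. \<forall>\<tau>\<in>K. \<sigma> \<subseteq> \<tau> \<longrightarrow> f \<sigma> \<le> f \<tau>)"

definition sublevel :: "'v set set \<Rightarrow> ('v set \<Rightarrow> real) \<Rightarrow> real \<Rightarrow> 'v set set" where
  "sublevel K f r = {\<sigma>\<in>K. f \<sigma> \<le> r}"

text \<open>Simplicial chains with coefficients in a field: an n-chain on L assigns
  coefficients to n-simplices (card = n+1) of L, zero elsewhere.  Simplices are
  oriented by the linear order of vertices.\<close>
definition is_chain :: "'v set set \<Rightarrow> nat \<Rightarrow> ('v set \<Rightarrow> 'k::field) \<Rightarrow> bool" where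
  "is_chain L n c \<longleftrightarrow> (\<forall>\<sigma>. c \<sigma> \<noteq> 0 \<longrightarrow> \<sigma> \<in> L \<and> card \<sigma> = n + 1)"

text \<open>Incidence number of the face tau in sigma: (-1)^i if tau arises from sigma
  by deleting its i-th vertex (counting from 0 in increasing order).\<close>
definition incidence :: "'v::linorder set \<Rightarrow> 'v set \<Rightarrow> 'k::field" where
  "incidence \<sigma> \<tau> =
     (if \<tau> \<subseteq> \<sigma> \<and> card \<tau> + 1 = card \<sigma>
      then (- 1) ^ card {v\<in>\<sigma>. v < the_elem (\<sigma> - \<tau>)} else 0)"

definition bdry :: "'v::linorder set set \<Rightarrow> ('v set \<Rightarrow> 'k::field) \<Rightarrow> ('v set \<Rightarrow> 'k)" where
  "bdry K c = (\<lambda>\<tau>. \<Sum>\<sigma>\<in>K. c \<sigma> * incidence \<sigma> \<tau>)"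

definition is_cycle :: "'v::linorder set set \<Rightarrow> 'v set set \<Rightarrow> nat \<Rightarrow> ('v set \<Rightarrow> 'k::field) \<Rightarrow> bool" where
  "is_cycle K L n c \<longleftrightarrow> is_chain L n c \<and> bdry K c = (\<lambda>_. 0)"

definition is_boundary :: "'v::linorder set set \<Rightarrow> 'v set set \<Rightarrow> nat \<Rightarrow> ('v set \<Rightarrow> 'k::field) \<Rightarrow> bool" where
  "is_boundary K L n c \<longleftrightarrow> (\<exists>d. is_chain L (n + 1) d \<and> bdry K d = c)"

definition birth :: "'v::linorder set set \<Rightarrow> ('v set \<Rightarrow> real) \<Rightarrow> nat \<Rightarrow> ('v set \<Rightarrow> 'k::field) \<Rightarrow> real \<Rightarrow> real" where
  "birth K f n \<alpha> r = Inf {q. q \<le> r \<and> (\<exists>\<beta>. is_cycle K (sublevel K f q) n \<beta> \<and>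
        is_boundary K (sublevel K f r) n (\<alpha> - \<beta>))}"

definition term_scale :: "'v::linorder set set \<Rightarrow> ('v set \<Rightarrow> real) \<Rightarrow> nat \<Rightarrow> ('v set \<Rightarrow> 'k::field) \<Rightarrow> real \<Rightarrow> real" where
  "term_scale K f n \<alpha> r = Inf {q. q \<ge> r \<and> is_boundary K (sublevel K f q) n \<alpha>}"

definition inj_perturbation :: "'v set set \<Rightarrow> ('v set \<Rightarrow> real) \<Rightarrow> real \<Rightarrow> ('v set \<Rightarrow> real) \<Rightarrow> bool" where
  "inj_perturbation K f \<epsilon> g \<longleftrightarrow> filtration_fun K g \<and> inj_on g K \<and>
     (\<forall>\<sigma>\<in>K. \<bar>f \<sigma> - g \<sigma>\<bar> \<le> \<epsilon>)"

definition terminating_simplex :: "'v::linorder set set \<Rightarrow> ('v set \<Rightarrow> real) \<Rightarrow> nat \<Rightarrow> ('v set \<Rightarrow> 'k::field) \<Rightarrow> 'v set \<Rightarrow> bool" where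
  "terminating_simplex K g n \<alpha> \<tau> \<longleftrightarrow> \<tau> \<in> K \<and>
     is_boundary K (sublevel K g (g \<tau>)) n \<alpha> \<and>
     (\<forall>r < g \<tau>. \<not> is_boundary K (sublevel K g r) n \<alpha>)"

definition Sigma_eps :: "'v::linorder set set \<Rightarrow> ('v set \<Rightarrow> real) \<Rightarrow> nat \<Rightarrow> ('v set \<Rightarrow> 'k::field) \<Rightarrow> real \<Rightarrow> 'v set set" where
  "Sigma_eps K f n \<alpha> \<epsilon> = {\<tau>. \<exists>g. inj_perturbation K f \<epsilon> g \<and> terminating_simplex K g n \<alpha> \<tau>}"

definition induced_perm :: "'v set list \<Rightarrow> ('v set \<Rightarrow> real) \<Rightarrow> (nat \<Rightarrow> nat) \<Rightarrow> bool" where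
  "induced_perm ss g p \<longleftrightarrow> p permutes {..<length ss} \<and>
     (\<forall>i j. i < j \<and> j < length ss \<longrightarrow> g (ss ! p i) < g (ss ! p j))"

definition Pi_eps :: "'v set set \<Rightarrow> ('v set \<Rightarrow> real) \<Rightarrow> 'v set list \<Rightarrow> real \<Rightarrow> (nat \<Rightarrow> nat) set" where
  "Pi_eps K f ss \<epsilon> = {p. \<exists>g. inj_perturbation K f \<epsilon> g \<and> induced_perm ss g p}"

end

theory Submission
  imports Defs
begin

lemma boundary_mono:
  "L \<subseteq> L' \<Longrightarrow> is_boundary K L n c \<Longrightarrow> is_boundary K L' n c"
  unfolding is_boundary_def is_chain_def by blast

lemma order_pres_term:
  assumes fin: "finite K" and inj: "inj_on g K"
    and pres: "\<forall>\<sigma>\<in>K. \<forall>\<rho>\<in>K. g \<sigma> < g \<rho> \<longrightarrow> h \<sigma> < h \<rho>"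
    and T: "terminating_simplex K g n \<alpha> \<tau>"
  shows "terminating_simplex K h n \<alpha> \<tau>"
proof -
  have le: "h \<sigma> \<le> h \<rho> \<longleftrightarrow> g \<sigma> \<le> g \<rho>" if "\<sigma> \<in> K" "\<rho> \<in> K" for \<sigma> \<rho>
  proof (cases "\<sigma> = \<rho>")
    case False
    then have "g \<sigma> \<noteq> g \<rho>" using inj that by (meson inj_onD)
    then show ?thesis using pres that by (metis linorder_not_le order_less_le)
  qed simp
  have tK: "\<tau> \<in> K" using T unfolding terminating_simplex_def by auto
  have s1: "sublevel K h (h \<tau>) = sublevel K g (g \<tau>)"
    unfolding sublevel_def using le tK by auto
  define S where "S = {\<sigma>\<in>K. g \<sigma> < g \<tau>}"
  define r0 where "r0 = Max (insert (g \<tau> - 1) (g ` S))"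
  have finS: "finite (insert (g \<tau> - 1) (g ` S))" using fin unfolding S_def by auto
  have r0lt: "r0 < g \<tau>"
    unfolding r0_def using finS by (subst Max_less_iff) (auto simp: S_def)
  have Ssub: "S \<subseteq> sublevel K g r0"
  proof
    fix \<sigma> assume s: "\<sigma> \<in> S"
    have "g \<sigma> \<le> r0" unfolding r0_def using finS s by (intro Max_ge) auto
    then show "\<sigma> \<in> sublevel K g r0" using s unfolding sublevel_def S_def by auto
  qed
  have "\<not> is_boundary K (sublevel K h r) n \<alpha>" if "r < h \<tau>" for r
  proof
    assume B: "is_boundary K (sublevel K h r) n \<alpha>"
    have "sublevel K h r \<subseteq> S"
    proof
      fix \<sigma> assume "\<sigma> \<in> sublevel K h r"
      then have "\<sigma> \<in> K" "h \<sigma> \<le> r" unfolding sublevel_def by auto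
      then have "\<not> h \<tau> \<le> h \<sigma>" using that by auto
      then have "\<not> g \<tau> \<le> g \<sigma>" using le[OF tK \<open>\<sigma> \<in> K\<close>] by simp
      then show "\<sigma> \<in> S" unfolding S_def using \<open>\<sigma> \<in> K\<close> by auto
    qed
    then have "is_boundary K (sublevel K g r0) n \<alpha>"
      using boundary_mono B Ssub by (meson order_trans)
    then show False using T r0lt unfolding terminating_simplex_def by auto
  qed
  then show ?thesis using T s1 tK unfolding terminating_simplex_def by auto
qed

lemma order_pres_perm:
  assumes "set ss \<subseteq> K"
    and pres: "\<forall>\<sigma>\<in>K. \<forall>\<rho>\<in>K. g \<sigma> < g \<rho> \<longrightarrow> h \<sigma> < h \<rho>"
    and P: "induced_perm ss g p"
  shows "induced_perm ss h p"
proof -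
  have pp: "p permutes {..<length ss}" using P unfolding induced_perm_def by auto
  have "h (ss ! p i) < h (ss ! p j)" if "i < j" "j < length ss" for i j
  proof -
    have "p i < length ss" "p j < length ss" using permutes_in_image[OF pp] that
      by auto
    then have "ss ! p i \<in> K" "ss ! p j \<in> K" using assms(1) by (auto dest: nth_mem)
    moreover have "g (ss ! p i) < g (ss ! p j)" using P that unfolding induced_perm_def by auto
    ultimately show ?thesis using pres by auto
  qed
  then show ?thesis using pp unfolding induced_perm_def by auto
qed

lemma perturb_near:
  assumes fin: "finite K" and F: "filtration_fun K f" and G: "inj_perturbation K f t g"
    and t: "t > 0"
  shows "\<forall>\<^sub>F \<epsilon> in at_left t. \<exists>h. inj_perturbation K f \<epsilon> h \<and>
            (\<forall>\<sigma>\<in>K. \<forall>\<rho>\<in>K. g \<sigma> < g \<rho> \<longrightarrow> h \<sigma> < h \<rho>)"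
proof -
  let ?P = "\<lambda>\<mu>::real. \<lambda>(\<sigma>,\<rho>). g \<sigma> < g \<rho> \<longrightarrow>
     g \<sigma> + \<mu> * (f \<sigma> - g \<sigma>) < g \<rho> + \<mu> * (f \<rho> - g \<rho>)"
  have "\<forall>x\<in>K \<times> K. \<forall>\<^sub>F \<mu> in at_right 0. ?P \<mu> x"
  proof
    fix x assume "x \<in> K \<times> K"
    obtain \<sigma> \<rho> where x: "x = (\<sigma>, \<rho>)" by fastforce
    show "\<forall>\<^sub>F \<mu> in at_right 0. ?P \<mu> x"
    proof (cases "g \<sigma> < g \<rho>")
      case True
      have "((\<lambda>\<mu>::real. (g \<rho> - g \<sigma>) + \<mu> * ((f \<rho> - g \<rho>) - (f \<sigma> - g \<sigma>)))
              \<longlongrightarrow> (g \<rho> - g \<sigma>) + 0 * ((f \<rho> - g \<rho>) - (f \<sigma> - g \<sigma>))) (at_right 0)"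
        by (intro tendsto_intros)
      then have "\<forall>\<^sub>F \<mu> in at_right 0. 0 < (g \<rho> - g \<sigma>) + \<mu> * ((f \<rho> - g \<rho>) - (f \<sigma> - g \<sigma>))"
        using True by (intro order_tendstoD(1)) auto
      then show ?thesis unfolding x by eventually_elim (auto simp: algebra_simps)
    qed (simp add: x)
  qed
  then have "\<forall>\<^sub>F \<mu> in at_right 0. \<forall>x\<in>K \<times> K. ?P \<mu> x"
    using fin by (intro eventually_ball_finite) auto
  then obtain m where m: "m > 0" and hm: "\<And>\<mu>. 0 < \<mu> \<Longrightarrow> \<mu> < m \<Longrightarrow> \<forall>x\<in>K \<times> K. ?P \<mu> x"
    unfolding eventually_at_right_field by auto
  define m1 where "m1 = min m 1"
  have m1: "m1 > 0" "m1 \<le> 1" "m1 \<le> m" using m unfolding m1_def by auto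
  show ?thesis
    unfolding eventually_at_left_field
  proof (intro exI[of _ "t - m1 * t"] conjI allI impI)
    show "t - m1 * t < t" using m1 t by simp
    fix y assume y: "t - m1 * t < y" "y < t"
    define \<mu> where "\<mu> = (t - y) / t"
    have mu: "0 < \<mu>" "\<mu> < m1" using y t m1 unfolding \<mu>_def by (auto simp: field_simps)
    have ty: "(1 - \<mu>) * t = y" unfolding \<mu>_def using t by (simp add: field_simps)
    define h where "h = (\<lambda>\<sigma>. g \<sigma> + \<mu> * (f \<sigma> - g \<sigma>))"
    have pres: "\<forall>\<sigma>\<in>K. \<forall>\<rho>\<in>K. g \<sigma> < g \<rho> \<longrightarrow> h \<sigma> < h \<rho>"
      using hm[of \<mu>] mu m1 unfolding h_def by fastforce
    have Gf: "filtration_fun K g" "inj_on g K" "\<forall>\<sigma>\<in>K. \<bar>f \<sigma> - g \<sigma>\<bar> \<le> t"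
      using G unfolding inj_perturbation_def by auto
    have "filtration_fun K h"
      unfolding filtration_fun_def
    proof (intro ballI impI)
      fix \<sigma> \<rho> assume "\<sigma> \<in> K" "\<rho> \<in> K" "\<sigma> \<subseteq> \<rho>"
      then have "g \<sigma> \<le> g \<rho>" "f \<sigma> \<le> f \<rho>" using Gf(1) F unfolding filtration_fun_def by auto
      then have "(1 - \<mu>) * g \<sigma> + \<mu> * f \<sigma> \<le> (1 - \<mu>) * g \<rho> + \<mu> * f \<rho>"
        using mu m1 by (intro add_mono mult_left_mono) auto
      then show "h \<sigma> \<le> h \<rho>" unfolding h_def by (simp add: algebra_simps)
    qed
    moreover have "inj_on h K"
    proof (rule inj_onI)
      fix \<sigma> \<rho> assume a: "\<sigma> \<in> K" "\<rho> \<in> K" "h \<sigma> = h \<rho>"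
      show "\<sigma> = \<rho>"
      proof (rule ccontr)
        assume "\<sigma> \<noteq> \<rho>"
        then have "g \<sigma> \<noteq> g \<rho>" using Gf(2) a by (meson inj_onD)
        then show False using pres a by (metis less_irrefl linorder_neq_iff)
      qed
    qed
    moreover have "\<bar>f \<sigma> - h \<sigma>\<bar> \<le> y" if "\<sigma> \<in> K" for \<sigma>
    proof -
      have "f \<sigma> - h \<sigma> = (1 - \<mu>) * (f \<sigma> - g \<sigma>)" unfolding h_def by (simp add: algebra_simps)
      then have "\<bar>f \<sigma> - h \<sigma>\<bar> = (1 - \<mu>) * \<bar>f \<sigma> - g \<sigma>\<bar>" using mu m1 by (simp add: abs_mult)
      also have "\<dots> \<le> (1 - \<mu>) * t" using Gf(3) that mu m1 by (intro mult_left_mono) auto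
      finally show ?thesis using ty by simp
    qed
    ultimately have "inj_perturbation K f y h" unfolding inj_perturbation_def by auto
    then show "\<exists>h. inj_perturbation K f y h \<and> (\<forall>\<sigma>\<in>K. \<forall>\<rho>\<in>K. g \<sigma> < g \<rho> \<longrightarrow> h \<sigma> < h \<rho>)"
      using pres by blast
  qed
qed

theorem lemma3p1:
  fixes K :: "'v::linorder set set" and f :: "'v set \<Rightarrow> real" and n :: nat
    and \<alpha> :: "'v set \<Rightarrow> 'k::field" and a b :: real and ss :: "'v set list"
  assumes "simplicial_complex K"
    and "filtration_fun K f" and "inj_on f K"
    and "n > 0"
    and "is_cycle K (sublevel K f a) n \<alpha>"
    and "\<not> is_boundary K (sublevel K f a) n \<alpha>"
    and "birth K f n \<alpha> a = a"
    and "\<exists>q \<ge> a. is_boundary K (sublevel K f q) n \<alpha>"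
    and "term_scale K f n \<alpha> a = b"
    and "b > a"
    and "distinct ss" and "set ss = {\<sigma>\<in>K. card \<sigma> = n + 2}"
  shows "\<forall>t \<in> {0<..(b - a) / 2}. \<exists>\<delta>>0. \<forall>\<epsilon> \<in> {t - \<delta><..t} \<inter> {0<..(b - a) / 2}.
           Sigma_eps K f n \<alpha> \<epsilon> = Sigma_eps K f n \<alpha> t \<and> Pi_eps K f ss \<epsilon> = Pi_eps K f ss t"
proof
  fix t assume "t \<in> {0<..(b - a) / 2}"
  then have t: "t > 0" by auto
  have fin: "finite K" using assms(1) unfolding simplicial_complex_def by auto
  have ssK: "set ss \<subseteq> K" using assms(12) by auto
  have mono1: "Sigma_eps K f n \<alpha> e \<subseteq> Sigma_eps K f n \<alpha> t" if "e \<le> t" for e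
    using that unfolding Sigma_eps_def inj_perturbation_def by fastforce
  have mono2: "Pi_eps K f ss e \<subseteq> Pi_eps K f ss t" if "e \<le> t" for e
    using that unfolding Pi_eps_def inj_perturbation_def by fastforce
  have finS: "finite (Sigma_eps K f n \<alpha> t)"
    by (rule finite_subset[OF _ fin]) (auto simp: Sigma_eps_def terminating_simplex_def)
  have finP: "finite (Pi_eps K f ss t)"
    by (rule finite_subset[OF _ finite_permutations[of "{..<length ss}"]])
       (auto simp: Pi_eps_def induced_perm_def)
  have E1: "\<forall>\<^sub>F e in at_left t. \<forall>x\<in>Sigma_eps K f n \<alpha> t. x \<in> Sigma_eps K f n \<alpha> e"
  proof (intro eventually_ball_finite finS ballI)
    fix x assume "x \<in> Sigma_eps K f n \<alpha> t"
    then obtain g where g: "inj_perturbation K f t g" "terminating_simplex K g n \<alpha> x"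
      unfolding Sigma_eps_def by auto
    have ig: "inj_on g K" using g(1) unfolding inj_perturbation_def by auto
    show "\<forall>\<^sub>F e in at_left t. x \<in> Sigma_eps K f n \<alpha> e"
      using perturb_near[OF fin assms(2) g(1) t]
      by eventually_elim (use order_pres_term[OF fin ig _ g(2)] in \<open>auto simp: Sigma_eps_def\<close>)
  qed
  have E2: "\<forall>\<^sub>F e in at_left t. \<forall>x\<in>Pi_eps K f ss t. x \<in> Pi_eps K f ss e"
  proof (intro eventually_ball_finite finP ballI)
    fix x assume "x \<in> Pi_eps K f ss t"
    then obtain g where g: "inj_perturbation K f t g" "induced_perm ss g x"
      unfolding Pi_eps_def by auto
    show "\<forall>\<^sub>F e in at_left t. x \<in> Pi_eps K f ss e"
      using perturb_near[OF fin assms(2) g(1) t]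
      by eventually_elim (use order_pres_perm[OF ssK _ g(2)] in \<open>auto simp: Pi_eps_def\<close>)
  qed
  from eventually_conj[OF E1 E2] obtain c where c: "c < t"
    and hc: "\<And>y. c < y \<Longrightarrow> y < t \<Longrightarrow>
      (\<forall>x\<in>Sigma_eps K f n \<alpha> t. x \<in> Sigma_eps K f n \<alpha> y) \<and> (\<forall>x\<in>Pi_eps K f ss t. x \<in> Pi_eps K f ss y)"
    unfolding eventually_at_left_field by blast
  show "\<exists>\<delta>>0. \<forall>\<epsilon> \<in> {t - \<delta><..t} \<inter> {0<..(b - a) / 2}.
           Sigma_eps K f n \<alpha> \<epsilon> = Sigma_eps K f n \<alpha> t \<and> Pi_eps K f ss \<epsilon> = Pi_eps K f ss t"
  proof (rule exI[of _ "t - c"], rule conjI)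
    show "t - c > 0" using c by simp
  next
    show "\<forall>\<epsilon> \<in> {t - (t - c)<..t} \<inter> {0<..(b - a) / 2}.
           Sigma_eps K f n \<alpha> \<epsilon> = Sigma_eps K f n \<alpha> t \<and> Pi_eps K f ss \<epsilon> = Pi_eps K f ss t"
    proof (rule ballI)
    fix e assume "e \<in> {t - (t - c)<..t} \<inter> {0<..(b - a) / 2}"
    then have e: "c < e" "e \<le> t" by auto
    show "Sigma_eps K f n \<alpha> e = Sigma_eps K f n \<alpha> t \<and> Pi_eps K f ss e = Pi_eps K f ss t"
    proof (cases "e = t")
      case False
      then have "e < t" using e by simp
      then show ?thesis using hc[OF e(1)] mono1[OF e(2)] mono2[OF e(2)] by blast
    next
      case True
      then show ?thesis by simp
    qed
    qed
  qed
qed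

end
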